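(* Let $G=(V,E)$ be a tree, $k\ge1$, and $f:E\to\{0,\dots,k\}$ an arbitrary labeling. Choose any orientation of $G$ as a rooted out-tree. Then $f$ is a valid labeling if and only if (1) for every $u\in V$, if $e=(u',u)\in E$ is the edge entering $u$, then $f(e)\notin S(u)$ or $f(e)=0$; and (2) for every $u\in V$ and distinct edges $e,e'\in\delta^+(u)$, the sets $L(e)$ and $L(e')$ are disjoint except possibly for the label $0$, i.e. $L(e)\cap L(e')\subseteq\{0\}$.
   Context: A valid labeling is a function $f:E\to\{0,\dots,k\}$ such that for every pair of distinct edges $e_1,e_2$ with $f(e_1)=f(e_2)>0$ there is an edge $e_3$ on the simple path between $e_1$ and $e_2$ with $f(e_3)>f(e_1)$. In a rooted out-tree, an edge from $u$ to $v$ is written $(u,v)$ and $\delta^+(u)$ is the set of edges leaving $u$. For edges $e,e'$, $e'$ is visible from $e$ if $e'$ lies on a directed path starting with $e$ and ending with $e'$ and no edge $e''$ on this path has $f(e'')>f(e')$. $L(e)$ (visibility sequence of $e$) is the set of labels $f(e')$ of edges $e'$ visible from $e$ (listed in ascending order). For a vertex $u$, $S(u)=\bigcup_{e\in\delta^+(u)}L(e)$. *)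

theory Defs
  imports Main
begin

definition upath :: "'a set set \<Rightarrow> 'a list \<Rightarrow> bool" where
  "upath E ps \<longleftrightarrow> ps \<noteq> [] \<and> distinct ps \<and>
     (\<forall>i. Suc i < length ps \<longrightarrow> {ps ! i, ps ! Suc i} \<in> E)"

definition path_edges :: "'a list \<Rightarrow> 'a set set" where
  "path_edges ps = {{ps ! i, ps ! Suc i} | i. Suc i < length ps}"

definition is_tree :: "'a set \<Rightarrow> 'a set set \<Rightarrow> bool" where
  "is_tree V E \<longleftrightarrow> finite V \<and> V \<noteq> {} \<and>
     (\<forall>e\<in>E. \<exists>u v. e = {u, v} \<and> u \<in> V \<and> v \<in> V \<and> u \<noteq> v) \<and>
     (\<forall>u\<in>V. \<forall>v\<in>V. \<exists>!ps. upath E ps \<and> hd ps = u \<and> last ps = v)"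

definition path_between_edges :: "'a set set \<Rightarrow> 'a set \<Rightarrow> 'a set \<Rightarrow> 'a list \<Rightarrow> bool" where
  "path_between_edges E e1 e2 ps \<longleftrightarrow> upath E ps \<and> length ps \<ge> 2 \<and>
     {ps ! 0, ps ! 1} = e1 \<and> {ps ! (length ps - 2), ps ! (length ps - 1)} = e2"

definition valid_labeling :: "'a set set \<Rightarrow> ('a set \<Rightarrow> nat) \<Rightarrow> bool" where
  "valid_labeling E f \<longleftrightarrow>
     (\<forall>e1\<in>E. \<forall>e2\<in>E. e1 \<noteq> e2 \<and> f e1 = f e2 \<and> f e1 > 0 \<longrightarrow>
        (\<exists>ps e3. path_between_edges E e1 e2 ps \<and> e3 \<in> path_edges ps \<and> f e3 > f e1))"

text \<open>Orientation as a rooted out-tree with root r: the edge {u,v} is oriented (u,v)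
 iff u immediately precedes v on the path from r to v.\<close>

definition arc :: "'a set set \<Rightarrow> 'a \<Rightarrow> 'a \<Rightarrow> 'a \<Rightarrow> bool" where
  "arc E r u v \<longleftrightarrow> {u, v} \<in> E \<and> (\<exists>ps. upath E (ps @ [u, v]) \<and> hd (ps @ [u, v]) = r)"

definition dpath :: "'a set set \<Rightarrow> 'a \<Rightarrow> 'a list \<Rightarrow> bool" where
  "dpath E r ps \<longleftrightarrow> (\<forall>i. Suc i < length ps \<longrightarrow> arc E r (ps ! i) (ps ! Suc i))"

definition visible :: "'a set set \<Rightarrow> 'a \<Rightarrow> ('a set \<Rightarrow> nat) \<Rightarrow> 'a \<times> 'a \<Rightarrow> 'a \<times> 'a \<Rightarrow> bool" where
  "visible E r f e e' \<longleftrightarrow> arc E r (fst e) (snd e) \<and> arc E r (fst e') (snd e') \<and>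
     (\<exists>ps. dpath E r ps \<and> length ps \<ge> 2 \<and> ps ! 0 = fst e \<and> ps ! 1 = snd e \<and>
        ps ! (length ps - 2) = fst e' \<and> ps ! (length ps - 1) = snd e' \<and>
        (\<forall>e''\<in>path_edges ps. f e'' \<le> f {fst e', snd e'}))"

definition vis_seq :: "'a set set \<Rightarrow> 'a \<Rightarrow> ('a set \<Rightarrow> nat) \<Rightarrow> 'a \<times> 'a \<Rightarrow> nat set" where
  "vis_seq E r f e = {f {fst e', snd e'} | e'. visible E r f e e'}"

definition S_set :: "'a set set \<Rightarrow> 'a \<Rightarrow> ('a set \<Rightarrow> nat) \<Rightarrow> 'a \<Rightarrow> nat set" where
  "S_set E r f u = (\<Union>v\<in>{v. arc E r u v}. vis_seq E r f (u, v))"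

end

theory Submission
  imports Defs
begin

lemma upath_succ: "upath E ps \<longleftrightarrow> ps \<noteq> [] \<and> distinct ps \<and> successively (\<lambda>x y. {x,y} \<in> E) ps"
  unfolding upath_def successively_conv_nth by auto

lemma upath_single[simp]: "upath E [x]"
  by (simp add: upath_succ)

lemma upath_append:
  assumes "xs \<noteq> []" "ys \<noteq> []"
  shows "upath E (xs @ ys) \<longleftrightarrow> upath E xs \<and> upath E ys \<and> {last xs, hd ys} \<in> E \<and> set xs \<inter> set ys = {}"
  using assms by (auto simp: upath_succ successively_append_iff)

lemma upath_rev[simp]: "upath E (rev xs) \<longleftrightarrow> upath E xs"
  by (auto simp: upath_succ insert_commute)

lemma upath_Cons2: "upath E (x # y # zs) \<longleftrightarrow> {x,y} \<in> E \<and> x \<notin> set (y # zs) \<and> upath E (y # zs)"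
  by (auto simp: upath_succ)

lemma upath_prefix: "upath E (xs @ ys) \<Longrightarrow> xs \<noteq> [] \<Longrightarrow> upath E xs"
  by (cases "ys = []") (auto simp: upath_append)

lemma upath_suffix: "upath E (xs @ ys) \<Longrightarrow> ys \<noteq> [] \<Longrightarrow> upath E ys"
  by (cases "xs = []") (auto simp: upath_append)

lemma upath_drop: "upath E xs \<Longrightarrow> n < length xs \<Longrightarrow> upath E (drop n xs)"
  by (metis append_take_drop_id drop_eq_Nil2 not_le upath_suffix)

lemma upath_take: "upath E xs \<Longrightarrow> 0 < n \<Longrightarrow> upath E (take n xs)"
  by (metis append_take_drop_id take_eq_Nil2 upath_prefix upath_succ neq0_conv)

lemma path_edges_Nil[simp]: "path_edges [] = {}" and path_edges_single[simp]: "path_edges [x] = {}"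
  by (auto simp: path_edges_def)

lemma path_edges_Cons2[simp]: "path_edges (x # y # zs) = insert {x,y} (path_edges (y # zs))"
proof (rule set_eqI, rule iffI)
  fix e assume "e \<in> path_edges (x # y # zs)"
  then obtain i where i: "e = {(x # y # zs) ! i, (x # y # zs) ! Suc i}" "Suc i < length (x # y # zs)"
    unfolding path_edges_def by blast
  show "e \<in> insert {x,y} (path_edges (y # zs))"
  proof (cases i)
    case 0 then show ?thesis using i by simp
  next
    case (Suc j) then show ?thesis using i unfolding path_edges_def by auto
  qed
next
  fix e assume "e \<in> insert {x,y} (path_edges (y # zs))"
  then show "e \<in> path_edges (x # y # zs)"
  proof
    assume "e = {x,y}" then show ?thesis unfolding path_edges_def
      by (auto intro!: exI[of _ 0])
  next
    assume "e \<in> path_edges (y # zs)"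
    then obtain i where i: "e = {(y # zs) ! i, (y # zs) ! Suc i}" "Suc i < length (y # zs)"
      unfolding path_edges_def by blast
    then show ?thesis unfolding path_edges_def
      by (auto intro!: exI[of _ "Suc i"])
  qed
qed

lemma path_edges_Cons: "ys \<noteq> [] \<Longrightarrow> path_edges (x # ys) = insert {x, hd ys} (path_edges ys)"
  by (cases ys) auto

lemma path_edges_append: "xs \<noteq> [] \<Longrightarrow> ys \<noteq> [] \<Longrightarrow>
   path_edges (xs @ ys) = path_edges xs \<union> path_edges ys \<union> {{last xs, hd ys}}"
proof (induction xs)
  case Nil then show ?case by simp
next
  case (Cons x xs)
  show ?case
  proof (cases "xs = []")
    case True then show ?thesis using Cons by (simp add: path_edges_Cons)
  next
    case False
    then show ?thesis using Cons by (auto simp: path_edges_Cons)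
  qed
qed

lemma path_edges_rev[simp]: "path_edges (rev xs) = path_edges xs"
proof (induction xs)
  case Nil then show ?case by simp
next
  case (Cons x xs)
  show ?case
  proof (cases "xs = []")
    case True then show ?thesis by simp
  next
    case False
    then show ?thesis using Cons by (simp add: path_edges_append path_edges_Cons last_rev hd_rev insert_commute)
  qed
qed

lemma lcp_ex: "\<exists>C xs' ys'. xs = C @ xs' \<and> ys = C @ ys' \<and> (xs' = [] \<or> ys' = [] \<or> hd xs' \<noteq> hd ys')"
proof (induction xs arbitrary: ys)
  case Nil then show ?case by auto
next
  case (Cons x xs)
  show ?case
  proof (cases ys)
    case Nil then show ?thesis by auto
  next
    case (Cons y ys')
    show ?thesis
    proof (cases "x = y")
      case True
      from Cons.IH[of ys'] obtain C a b where "xs = C @ a" "ys' = C @ b" "a = [] \<or> b = [] \<or> hd a \<noteq> hd b" by blast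
      then show ?thesis using True Cons by (intro exI[of _ "x # C"] exI[of _ a] exI[of _ b]) auto
    next
      case False
      then show ?thesis using Cons by (intro exI[of _ "[]"] exI[of _ "x#xs"] exI[of _ ys]) auto
    qed
  qed
qed


lemma len2_ne: "2 \<le> length xs \<Longrightarrow> xs \<noteq> []"
  by auto

lemma rev_nth0: "xs \<noteq> [] \<Longrightarrow> rev xs ! 0 = xs ! (length xs - 1)"
  by (simp add: rev_nth)

lemma rev_nth1: "2 \<le> length xs \<Longrightarrow> rev xs ! 1 = xs ! (length xs - 2)"
  by (simp add: rev_nth numeral_2_eq_2)

lemma rev_nth_m2: "2 \<le> length xs \<Longrightarrow> rev xs ! (length xs - 2) = xs ! 1"
  by (simp add: rev_nth)

lemma rev_nth_m1: "xs \<noteq> [] \<Longrightarrow> rev xs ! (length xs - 1) = xs ! 0"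
  by (simp add: rev_nth)

lemma last_nth2: "2 \<le> length xs \<Longrightarrow> last xs = xs ! (length xs - 1)"
proof - assume "2 \<le> length xs" then have "xs \<noteq> []" by auto then show ?thesis by (simp add: last_conv_nth) qed

lemma hd_nth2: "2 \<le> length xs \<Longrightarrow> hd xs = xs ! 0"
proof - assume "2 \<le> length xs" then have "xs \<noteq> []" by auto then show ?thesis by (simp add: hd_conv_nth) qed

lemma hd_butlast2: "2 \<le> length xs \<Longrightarrow> hd (butlast xs) = xs ! 0"
proof - assume a: "2 \<le> length xs" then have "butlast xs \<noteq> []" by (cases xs) auto
  then show ?thesis using a by (simp add: hd_conv_nth nth_butlast) qed

lemma last_butlast2: "2 \<le> length xs \<Longrightarrow> last (butlast xs) = xs ! (length xs - 2)"
proof - assume a: "2 \<le> length xs" then have "butlast xs \<noteq> []" by (cases xs) auto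
  then show ?thesis using a by (simp add: last_conv_nth nth_butlast numeral_2_eq_2) qed

lemma hd_tl2: "2 \<le> length xs \<Longrightarrow> hd (tl xs) = xs ! 1"
proof - assume a: "2 \<le> length xs" then have "tl xs \<noteq> []" by (cases xs) auto
  then show ?thesis using a by (simp add: hd_conv_nth nth_tl) qed

lemma last_tl2: "2 \<le> length xs \<Longrightarrow> last (tl xs) = xs ! (length xs - 1)"
proof - assume a: "2 \<le> length xs" then have "tl xs \<noteq> []" by (cases xs) auto
  moreover have "Suc (length xs - Suc (Suc 0)) = length xs - Suc 0" using a by arith
  ultimately show ?thesis using a by (simp add: last_conv_nth nth_tl) qed

lemma last_notin_butlast: "xs \<noteq> [] \<Longrightarrow> distinct xs \<Longrightarrow> last xs \<notin> set (butlast xs)"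
proof -
  assume a: "xs \<noteq> []" "distinct xs"
  then have "distinct (butlast xs @ [last xs])" using append_butlast_last_id[OF a(1)] by simp
  then show ?thesis by simp
qed

lemma app_nth_end2: "2 \<le> length ys \<Longrightarrow> (xs @ ys) ! (length (xs @ ys) - 2) = ys ! (length ys - 2)"
proof -
  assume a: "2 \<le> length ys"
  then have "length (xs @ ys) - 2 = length xs + (length ys - 2)" by simp
  then show ?thesis by (simp only: nth_append_length_plus)
qed

lemma app_nth_end1: "ys \<noteq> [] \<Longrightarrow> (xs @ ys) ! (length (xs @ ys) - 1) = ys ! (length ys - 1)"
proof -
  assume a: "ys \<noteq> []"
  then have "length (xs @ ys) - 1 = length xs + (length ys - 1)" by (cases ys) auto
  then show ?thesis by (simp only: nth_append_length_plus)
qed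

lemma len2_split: "2 \<le> length ds \<Longrightarrow> ds = ds ! 0 # ds ! 1 # drop 2 ds"
proof -
  assume "2 \<le> length ds"
  then obtain x y zs where "ds = x # y # zs" by (metis One_nat_def Suc_1 Suc_le_length_iff)
  then show ?thesis by simp
qed

lemma app_nth_front: "2 \<le> length xs \<Longrightarrow> (xs @ ys) ! 0 = xs ! 0 \<and> (xs @ ys) ! 1 = xs ! 1"
proof -
  assume "2 \<le> length xs"
  then obtain x y zs where "xs = x # y # zs" by (metis One_nat_def Suc_1 Suc_le_length_iff)
  then show ?thesis by simp
qed

lemma ends_of_app:
  assumes "xs @ q = zs @ [p, c]" "2 \<le> length q"
  shows "q ! (length q - 2) = p" "q ! (length q - 1) = c"
proof -
  have "(xs @ q) ! (length (xs @ q) - 2) = q ! (length q - 2)" using app_nth_end2 assms(2) by blast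
  moreover have "(zs @ [p, c]) ! (length (zs @ [p, c]) - 2) = [p, c] ! (length [p, c] - 2)"
    using app_nth_end2[of "[p, c]" zs] by simp
  ultimately show "q ! (length q - 2) = p" using assms(1) by simp
  have "q \<noteq> []" using assms(2) by auto
  then have "(xs @ q) ! (length (xs @ q) - 1) = q ! (length q - 1)" using app_nth_end1 by blast
  moreover have "(zs @ [p, c]) ! (length (zs @ [p, c]) - 1) = [p, c] ! (length [p, c] - 1)"
    using app_nth_end1[of "[p, c]" zs] by simp
  ultimately show "q ! (length q - 1) = c" using assms(1) by simp
qed


lemma ends_differ:
  assumes "path_between_edges E e1 e2 q" "3 \<le> length q"
  shows "e1 \<noteq> e2"
proof
  assume eq: "e1 = e2"
  define m where "m = length q"
  have d: "distinct q" using assms(1) by (simp add: path_between_edges_def upath_def)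
  have qne: "q \<noteq> []" using assms(2) by (cases q) auto
  have "{q ! 0, q ! 1} = {q ! (m - 2), q ! (m - 1)}"
    using assms(1) eq unfolding path_between_edges_def m_def by simp
  then have "(q ! 0 = q ! (m - 2) \<and> q ! 1 = q ! (m - 1)) \<or> (q ! 0 = q ! (m - 1) \<and> q ! 1 = q ! (m - 2))"
    by (auto simp: doubleton_eq_iff)
  moreover have "q ! 0 \<noteq> q ! (m - 2)"
  proof
    assume e: "q ! 0 = q ! (m - 2)"
    have "(q ! 0 = q ! (m - 2)) = (0 = m - 2)"
      by (rule nth_eq_iff_index_eq[OF d]) (use assms(2) m_def qne in simp_all)
    then have "0 = m - 2" using e by simp
    then show False using assms(2) m_def by simp
  qed
  moreover have "q ! 0 \<noteq> q ! (m - 1)"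
  proof
    assume e: "q ! 0 = q ! (m - 1)"
    have "(q ! 0 = q ! (m - 1)) = (0 = m - 1)"
      by (rule nth_eq_iff_index_eq[OF d]) (use assms(2) m_def qne in simp_all)
    then have "0 = m - 1" using e by simp
    then show False using assms(2) m_def by simp
  qed
  ultimately show False by blast
qed

lemma join:
  fixes u v w :: 'a and as bs :: "'a list"
  defines "D1 \<equiv> u # v # as" and "D2 \<equiv> u # w # bs" and "q \<equiv> rev (v # as) @ u # w # bs"
  assumes u1: "upath E D1" and u2: "upath E D2" and dj: "set (v # as) \<inter> set (w # bs) = {}"
  shows "upath E q" "path_edges q = path_edges D1 \<union> path_edges D2"
    "path_between_edges E {D1 ! (length D1 - 2), D1 ! (length D1 - 1)} {D2 ! (length D2 - 2), D2 ! (length D2 - 1)} q"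
    "3 \<le> length q"
proof -
  have c1: "{u, v} \<in> E" "u \<notin> set (v # as)" "upath E (v # as)" using u1 unfolding D1_def upath_Cons2 by auto
  have c2: "upath E (rev (v # as))" by (subst upath_rev) (rule c1(3))
  show uq: "upath E q" unfolding q_def
    by (rule iffD2[OF upath_append]) (use c1 c2 dj in \<open>auto simp: D2_def u2[unfolded D2_def] insert_commute\<close>)
  have pe1: "path_edges q = path_edges (rev (v # as)) \<union> path_edges D2 \<union> {{last (rev (v # as)), hd D2}}"
    unfolding q_def D2_def by (rule path_edges_append) simp_all
  have pe2: "path_edges (rev (v # as)) = path_edges (v # as)" by (rule path_edges_rev)
  have pe3: "path_edges D1 = insert {u, v} (path_edges (v # as))" unfolding D1_def by (rule path_edges_Cons2)
  have pe4: "{last (rev (v # as)), hd D2} = {u, v}" unfolding D2_def by (simp add: insert_commute)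
  show "path_edges q = path_edges D1 \<union> path_edges D2"
    unfolding pe1 pe2 pe3 pe4 by blast
  show l3: "3 \<le> length q" unfolding q_def D2_def by simp
  have qalt: "q = rev D1 @ (w # bs)" unfolding q_def D1_def D2_def by simp
  have lD1: "2 \<le> length D1" unfolding D1_def by simp
  have lD2: "2 \<le> length D2" unfolding D2_def by simp
  have "q ! 0 = rev D1 ! 0" "q ! 1 = rev D1 ! 1" using app_nth_front[of "rev D1" "w # bs"] lD1 qalt by auto
  then have f: "q ! 0 = D1 ! (length D1 - 1)" "q ! 1 = D1 ! (length D1 - 2)"
  proof -
    have "rev D1 ! 0 = D1 ! (length D1 - 1)" by (rule rev_nth0) (simp add: D1_def)
    moreover have "rev D1 ! 1 = D1 ! (length D1 - 2)" by (rule rev_nth1[OF lD1])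
    ultimately show "q ! 0 = D1 ! (length D1 - 1)" "q ! 1 = D1 ! (length D1 - 2)"
      using \<open>q ! 0 = rev D1 ! 0\<close> \<open>q ! 1 = rev D1 ! 1\<close> by simp_all
  qed
  have qD: "q = rev (v # as) @ D2" by (simp add: q_def D2_def)
  have "q ! (length q - 2) = D2 ! (length D2 - 2)" unfolding qD by (rule app_nth_end2[OF lD2])
  moreover have "q ! (length q - 1) = D2 ! (length D2 - 1)" unfolding qD
    by (rule app_nth_end1) (simp add: D2_def)
  ultimately have "q ! (length q - 2) = D2 ! (length D2 - 2)" "q ! (length q - 1) = D2 ! (length D2 - 1)"
    by simp_all
  then show "path_between_edges E {D1 ! (length D1 - 2), D1 ! (length D1 - 1)} {D2 ! (length D2 - 2), D2 ! (length D2 - 1)} q"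
    unfolding path_between_edges_def using uq l3 f by (auto simp: insert_commute)
qed

lemma vis_intro:
  assumes "dpath E r ds" "2 \<le> length ds"
    "\<forall>e\<in>path_edges ds. f e \<le> f {ds ! (length ds - 2), ds ! (length ds - 1)}"
  shows "f {ds ! (length ds - 2), ds ! (length ds - 1)} \<in> vis_seq E r f (ds ! 0, ds ! 1)"
proof -
  have a0: "arc E r (ds ! 0) (ds ! Suc 0)" using assms(1,2) unfolding dpath_def by auto
  have "Suc (length ds - 2) < length ds" using assms(2) by simp
  then have "arc E r (ds ! (length ds - 2)) (ds ! Suc (length ds - 2))" using assms(1) unfolding dpath_def by blast
  moreover have "Suc (length ds - 2) = length ds - 1" using assms(2) by simp
  ultimately have a1: "arc E r (ds ! (length ds - 2)) (ds ! (length ds - 1))" by simp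
  have "visible E r f (ds ! 0, ds ! 1) (ds ! (length ds - 2), ds ! (length ds - 1))"
    unfolding visible_def using a0 a1 assms by auto
  then show ?thesis unfolding vis_seq_def by force
qed

lemma vis_elim:
  assumes "a \<in> vis_seq E r f (u, v)"
  obtains ds where "dpath E r ds" "2 \<le> length ds" "ds ! 0 = u" "ds ! 1 = v"
    "a = f {ds ! (length ds - 2), ds ! (length ds - 1)}"
    "\<forall>e\<in>path_edges ds. f e \<le> a"
  using assms unfolding vis_seq_def visible_def by auto

lemma dpath_arc_end:
  assumes "dpath E r ds" "2 \<le> length ds"
  shows "arc E r (ds ! (length ds - 2)) (ds ! (length ds - 1))"
proof -
  have "Suc (length ds - 2) < length ds" using assms(2) by simp
  then have "arc E r (ds ! (length ds - 2)) (ds ! Suc (length ds - 2))" using assms(1) unfolding dpath_def by blast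
  moreover have "Suc (length ds - 2) = length ds - 1" using assms(2) by simp
  ultimately show ?thesis by simp
qed

locale rtree =
  fixes V :: "'a set" and E :: "'a set set" and r :: 'a
  assumes tree: "is_tree V E" and rV: "r \<in> V"
begin

lemma edge_form: "\<forall>e\<in>E. \<exists>u v. e = {u, v} \<and> u \<in> V \<and> v \<in> V \<and> u \<noteq> v"
  using tree[unfolded is_tree_def, THEN conjunct2, THEN conjunct2, THEN conjunct1] .

lemma paths_uniq: "\<forall>u\<in>V. \<forall>v\<in>V. \<exists>!ps. upath E ps \<and> hd ps = u \<and> last ps = v"
  using tree[unfolded is_tree_def, THEN conjunct2, THEN conjunct2, THEN conjunct2] .

lemma edge_V: "{x,y} \<in> E \<Longrightarrow> x \<in> V \<and> y \<in> V"
proof -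
  assume "{x,y} \<in> E"
  then obtain u v where "{x,y} = {u,v}" "u \<in> V" "v \<in> V" using edge_form by blast
  then show ?thesis by (auto simp: doubleton_eq_iff)
qed

lemma upath_set: "upath E ps \<Longrightarrow> hd ps \<in> V \<Longrightarrow> set ps \<subseteq> V"
proof (induction ps rule: induct_list012)
  case (3 x y zs)
  then show ?case using edge_V by (auto simp: upath_Cons2)
qed auto

lemma uniq: "upath E ps \<Longrightarrow> upath E qs \<Longrightarrow> hd ps = hd qs \<Longrightarrow> hd ps \<in> V \<Longrightarrow> last ps = last qs \<Longrightarrow> ps = qs"
proof -
  assume a: "upath E ps" "upath E qs" "hd ps = hd qs" "hd ps \<in> V" "last ps = last qs"
  have "last ps \<in> V" using upath_set[OF a(1) a(4)] a(1) by (auto simp: upath_def)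
  then have "\<exists>!p. upath E p \<and> hd p = hd ps \<and> last p = last ps"
    using paths_uniq a(4) by blast
  then obtain p where p: "\<And>q. upath E q \<and> hd q = hd ps \<and> last q = last ps \<Longrightarrow> q = p"
    by (metis ex1E)
  have "ps = p" using a by (intro p) simp
  moreover have "qs = p" using a by (intro p) simp
  ultimately show ?thesis by simp
qed

lemma root_ex: "v \<in> V \<Longrightarrow> \<exists>L. upath E L \<and> hd L = r \<and> last L = v"
  using paths_uniq rV by blast

lemma arc_nth:
  assumes "upath E xs" "hd xs = r" "Suc i < length xs"
  shows "arc E r (xs ! i) (xs ! Suc i)"
proof -
  have t: "take (Suc (Suc i)) xs = take i xs @ [xs ! i, xs ! Suc i]"
    using assms(3) by (simp add: take_Suc_conv_app_nth)
  have "upath E (take (Suc (Suc i)) xs)" using upath_take[OF assms(1)] by simp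
  moreover have "hd (take (Suc (Suc i)) xs) = r" using assms(2) by simp
  moreover have "{xs ! i, xs ! Suc i} \<in> E" using assms(1,3) by (simp add: upath_def)
  ultimately show ?thesis unfolding arc_def t by blast
qed

lemma dpath_drop: "upath E xs \<Longrightarrow> hd xs = r \<Longrightarrow> dpath E r (drop j xs)"
proof -
  assume a: "upath E xs" "hd xs = r"
  show ?thesis unfolding dpath_def
  proof (intro allI impI)
    fix i assume "Suc i < length (drop j xs)"
    then have "Suc (j + i) < length xs" by simp
    then have "arc E r (xs ! (j + i)) (xs ! Suc (j + i))" using arc_nth[OF a] by blast
    then show "arc E r (drop j xs ! i) (drop j xs ! Suc i)"
      using \<open>Suc (j + i) < length xs\<close> by simp
  qed
qed

lemma dpath_tl: "dpath E r (u # zs) \<Longrightarrow> dpath E r zs"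
  unfolding dpath_def by (metis Suc_less_eq length_Cons nth_Cons_Suc)

lemma dpath_root:
  "dpath E r (u # zs) \<Longrightarrow> upath E R \<Longrightarrow> hd R = r \<Longrightarrow> last R = u \<Longrightarrow> upath E (R @ zs)"
proof (induction zs arbitrary: u R)
  case Nil then show ?case by simp
next
  case (Cons v zs)
  have "\<forall>i. Suc i < length (u # v # zs) \<longrightarrow> arc E r ((u # v # zs) ! i) ((u # v # zs) ! Suc i)"
    using Cons.prems(1) unfolding dpath_def .
  from this[rule_format, of 0] have "arc E r u v" by simp
  then obtain ps where ps: "upath E (ps @ [u, v])" "hd (ps @ [u, v]) = r" unfolding arc_def by blast
  have u1: "upath E (ps @ [u])" using upath_prefix[of E "ps @ [u]" "[v]"] ps(1) by simp
  have u2: "hd (ps @ [u]) = r" using ps(2) by (cases ps) auto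
  have Rne: "R \<noteq> []" using Cons.prems(2) by (simp add: upath_def)
  have "ps @ [u] = R"
    by (rule uniq[OF u1 Cons.prems(2)]) (simp_all add: u2 Cons.prems(3,4) rV)
  then have "R @ [v] = ps @ [u, v]" by auto
  then have a1: "upath E (R @ [v])" using ps(1) by simp
  have a2: "hd (R @ [v]) = r" using Cons.prems(3) Rne by simp
  have a3: "last (R @ [v]) = v" by simp
  have "upath E ((R @ [v]) @ zs)"
    by (rule Cons.IH[OF dpath_tl[OF Cons.prems(1)] a1 a2 a3])
  then show ?case by simp
qed

lemma arc_or:
  assumes "{x,y} \<in> E" shows "arc E r x y \<or> arc E r y x"
proof -
  have xy: "x \<in> V" "y \<in> V" using edge_V assms by auto
  obtain u v where "{x,y} = {u,v}" "u \<noteq> v" using edge_form assms by blast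
  then have "x \<noteq> y" by (auto simp: doubleton_eq_iff)
  have yx: "{y,x} \<in> E" using assms by (simp add: insert_commute)
  obtain L where L: "upath E L" "hd L = r" "last L = y" using root_ex xy by blast
  have Lne: "L \<noteq> []" using L by (simp add: upath_def)
  show ?thesis
  proof (cases "x \<in> set L")
    case False
    have Lb: "butlast L @ [y, x] = L @ [x]"
      using Lne L(3) by (metis append.assoc append_Cons append_Nil append_butlast_last_id)
    have p1: "upath E (L @ [x])"
      by (rule iffD2[OF upath_append]) (use L(1,3) Lne False yx in auto)
    have p2: "hd (L @ [x]) = r" using L Lne by simp
    have "upath E (butlast L @ [y, x]) \<and> hd (butlast L @ [y, x]) = r"
      unfolding Lb using p1 p2 by blast
    then have "arc E r y x" unfolding arc_def using yx by blast
    then show ?thesis by blast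
  next
    case True
    then obtain A B where AB: "L = A @ x # B" by (meson split_list)
    have dL: "distinct L" using L by (simp add: upath_def)
    have Bne: "B \<noteq> []" using AB L(3) \<open>x \<noteq> y\<close> by auto
    have "last B = y" using AB L(3) Bne by simp
    then have yB: "y \<in> set B" using Bne last_in_set by blast
    have yA: "y \<notin> set (A @ [x])"
      using dL AB yB by auto
    have ua: "upath E (A @ [x])" using upath_prefix[of E "A @ [x]" B] L AB by simp
    have u: "upath E ((A @ [x]) @ [y])"
      by (rule iffD2[OF upath_append]) (use ua yA assms in auto)
    have h: "hd ((A @ [x]) @ [y]) = r" using L AB by (cases A) auto
    have "(A @ [x]) @ [y] = L" by (rule uniq[OF u L(1)]) (use h L rV in simp_all)
    have "arc E r x y" unfolding arc_def using u h assms
      by (intro conjI exI[of _ A]) simp_all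
    then show ?thesis by blast
  qed
qed

lemma disj:
  assumes "upath E (C @ v # as)" "upath E (C @ w # bs)" "hd C = r" "C \<noteq> []" "v \<noteq> w"
  shows "set (v # as) \<inter> set (w # bs) = {}"
proof (rule ccontr)
  assume "set (v # as) \<inter> set (w # bs) \<noteq> {}"
  then obtain z where z: "z \<in> set (v # as)" "z \<in> set (w # bs)" by blast
  obtain as1 as2 where a: "v # as = as1 @ z # as2" using z(1) by (meson split_list)
  obtain bs1 bs2 where b: "w # bs = bs1 @ z # bs2" using z(2) by (meson split_list)
  have "upath E ((C @ as1 @ [z]) @ as2)" using assms(1) a by simp
  then have ua: "upath E (C @ as1 @ [z])" by (rule upath_prefix) simp
  have "upath E ((C @ bs1 @ [z]) @ bs2)" using assms(2) b by simp
  then have ub: "upath E (C @ bs1 @ [z])" by (rule upath_prefix) simp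
  have "C @ as1 @ [z] = C @ bs1 @ [z]" using uniq[OF ua ub] assms(3,4) rV by simp
  then have "as1 = bs1" by simp
  then show False using a b assms(5) by (cases as1) auto
qed


lemma pb_rev:
  assumes "path_between_edges E e1 e2 ps"
  shows "path_between_edges E e2 e1 (rev ps)"
proof -
  have l: "length ps \<ge> 2" using assms by (simp add: path_between_edges_def)
  have "rev ps ! 0 = ps ! (length ps - 1)" "rev ps ! 1 = ps ! (length ps - 2)"
    "rev ps ! (length ps - 2) = ps ! 1" "rev ps ! (length ps - 1) = ps ! 0"
    using l len2_ne[OF l] rev_nth0 rev_nth1 rev_nth_m2 rev_nth_m1 by auto
  then show ?thesis using assms l unfolding path_between_edges_def
    by (simp add: insert_commute)
qed

lemma pb1:
  assumes p: "path_between_edges E e1 e2 ps" and q: "path_between_edges E e1 e2 q"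
    and h: "ps ! 0 = q ! 0"
  shows "ps = q"
proof -
  define n where "n = length ps"
  define m where "m = length q"
  have up: "upath E ps" "n \<ge> 2" "{ps ! 0, ps ! 1} = e1" "{ps ! (n - 2), ps ! (n - 1)} = e2"
    using p unfolding path_between_edges_def n_def by auto
  have uq: "upath E q" "m \<ge> 2" "{q ! 0, q ! 1} = e1" "{q ! (m - 2), q ! (m - 1)} = e2"
    using q unfolding path_between_edges_def m_def by auto
  have "{ps ! 0, ps ! Suc 0} \<in> E" using up(1,2) unfolding upath_def n_def by auto
  then have aV: "ps ! 0 \<in> V" using edge_V by auto
  have psne: "ps \<noteq> []" "q \<noteq> []" using up(2) uq(2) n_def m_def by auto
  have hps: "hd ps = ps ! 0" using psne by (simp add: hd_conv_nth)
  have hq: "hd q = q ! 0" using psne by (simp add: hd_conv_nth)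
  have lps: "last ps = ps ! (n - 1)" using up(2) n_def by (simp add: last_nth2)
  have lq: "last q = q ! (m - 1)" using uq(2) m_def by (simp add: last_nth2)
  show ?thesis
  proof (cases "ps ! (n - 1) = q ! (m - 1)")
    case True
    show ?thesis by (rule uniq[OF up(1) uq(1)]) (use hps hq lps lq h aV True in simp_all)
  next
    case False
    have "{ps ! (n - 2), ps ! (n - 1)} = {q ! (m - 2), q ! (m - 1)}" using up(4) uq(4) by simp
    then have eqs: "ps ! (n - 1) = q ! (m - 2)" "ps ! (n - 2) = q ! (m - 1)"
      using False by (auto simp: doubleton_eq_iff)
    have ub: "upath E (butlast q)" using upath_take[OF uq(1), of "m - 1"] uq(2)
      by (simp add: butlast_conv_take m_def)
    have lb: "length (butlast q) = m - 1" using m_def by simp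
    have hb: "hd (butlast q) = q ! 0" using uq(2) m_def hd_butlast2 by blast
    have lbq: "last (butlast q) = q ! (m - 2)" using uq(2) m_def last_butlast2 by blast
    have pb: "ps = butlast q"
      by (rule uniq[OF up(1) ub]) (use hps hb h aV lps lbq eqs in simp_all)
    have "ps ! (n - 2) \<in> set ps" using up(2) n_def by simp
    then have "q ! (m - 1) \<in> set ps" by (simp only: eqs(2))
    then have "last q \<in> set (butlast q)" using pb lq by simp
    moreover have "distinct q" using uq(1) by (simp add: upath_def)
    ultimately show ?thesis using last_notin_butlast psne(2) by blast
  qed
qed

lemma pb_uniq:
  assumes p: "path_between_edges E e1 e2 ps" and q: "path_between_edges E e1 e2 q"
    and ne: "e1 \<noteq> e2"
  shows "ps = q"
proof (cases "ps ! 0 = q ! 0")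
  case True then show ?thesis using pb1 p q by blast
next
  case False
  define n where "n = length ps"
  define m where "m = length q"
  have up: "upath E ps" "n \<ge> 2" "{ps ! 0, ps ! 1} = e1" "{ps ! (n - 2), ps ! (n - 1)} = e2"
    using p unfolding path_between_edges_def n_def by auto
  have uq: "upath E q" "m \<ge> 2" "{q ! 0, q ! 1} = e1" "{q ! (m - 2), q ! (m - 1)} = e2"
    using q unfolding path_between_edges_def m_def by auto
  have f01: "ps ! 0 = q ! 1" "ps ! 1 = q ! 0" using up(3) uq(3) False by (auto simp: doubleton_eq_iff)
  show ?thesis
  proof (cases "ps ! (n - 1) = q ! (m - 1)")
    case True
    have psne: "ps \<noteq> []" "q \<noteq> []" using up(2) uq(2) n_def m_def by auto
    have "rev ps ! 0 = rev q ! 0" using True psne n_def m_def by (simp add: rev_nth0)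
    then have "rev ps = rev q" using pb1[OF pb_rev[OF p] pb_rev[OF q]] by blast
    then show ?thesis by simp
  next
    case False
    have "{ps ! (n - 2), ps ! (n - 1)} = {q ! (m - 2), q ! (m - 1)}" using up(4) uq(4) by simp
    then have eqs: "ps ! (n - 1) = q ! (m - 2)" "ps ! (n - 2) = q ! (m - 1)"
      using False by (auto simp: doubleton_eq_iff)
    have "{ps ! 0, ps ! Suc 0} \<in> E" using up(1,2) unfolding upath_def n_def by auto
    then have aV: "ps ! 1 \<in> V" using edge_V by auto
    have ub: "upath E (butlast q)" using upath_take[OF uq(1), of "m - 1"] uq(2)
      by (simp add: butlast_conv_take m_def)
    have lb: "length (butlast q) = m - 1" using m_def by simp
    have hb: "hd (butlast q) = q ! 0" using uq(2) m_def hd_butlast2 by blast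
    have lbq: "last (butlast q) = q ! (m - 2)" using uq(2) m_def last_butlast2 by blast
    have ut: "upath E (tl ps)" using upath_drop[OF up(1), of 1] up(2) n_def by (simp add: drop_Suc)
    have lt: "length (tl ps) = n - 1" using n_def by simp
    have ht: "hd (tl ps) = ps ! 1" using up(2) n_def hd_tl2 by blast
    have ltq: "last (tl ps) = ps ! (n - 1)" using up(2) n_def last_tl2 by blast
    have tb: "tl ps = butlast q"
      by (rule uniq[OF ut ub]) (use ht hb f01 aV ltq lbq eqs in simp_all)
    have psq: "ps = q ! 1 # butlast q"
      using tb f01 up(2) n_def by (metis hd_Cons_tl hd_conv_nth list.size(3) not_numeral_le_zero)
    show ?thesis
    proof (cases "m = 2")
      case True
      then have "e1 = e2" using uq(3,4) by simp
      then show ?thesis using ne by simp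
    next
      case False
      then have "q ! 1 \<in> set (butlast q)" using uq(2) lb
        by (metis One_nat_def Suc_lessI diff_Suc_1 le_neq_implies_less nat_1_add_1 nth_butlast nth_mem numeral_2_eq_2 plus_1_eq_Suc less_diff_conv)
      moreover have "distinct ps" using up(1) by (simp add: upath_def)
      ultimately show ?thesis using psq by simp
    qed
  qed
qed

lemma fwd1:
  assumes valid: "valid_labeling E f" and au: "arc E r u' u"
    and aS: "f {u', u} \<in> S_set E r f u" and a0: "f {u', u} \<noteq> 0"
  shows False
proof -
  define a where "a = f {u', u}"
  obtain v where av: "arc E r u v" and h: "a \<in> vis_seq E r f (u, v)"
    using aS unfolding S_set_def a_def by blast
  obtain ds where ds: "dpath E r ds" "2 \<le> length ds" "ds ! 0 = u" "ds ! 1 = v"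
    "a = f {ds ! (length ds - 2), ds ! (length ds - 1)}"
    "\<forall>e\<in>path_edges ds. f e \<le> a"
    by (rule vis_elim[OF h])
  obtain zs where dsu: "ds = u # zs" using ds(2,3) by (cases ds) auto
  have zne: "zs \<noteq> []" using ds(2) dsu by auto
  from au obtain ps where ps: "upath E (ps @ [u', u])" "hd (ps @ [u', u]) = r" and e1E: "{u', u} \<in> E"
    unfolding arc_def by blast
  have "dpath E r (u # zs)" using ds(1) dsu by simp
  then have "upath E ((ps @ [u', u]) @ zs)" by (rule dpath_root[OF _ ps(1) ps(2)]) simp
  then have "upath E (ps @ (u' # ds))" using dsu by simp
  then have uq: "upath E (u' # ds)" by (rule upath_suffix) simp
  define q where "q = u' # ds"
  have lq: "3 \<le> length q" using q_def ds(2) by simp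
  have qa: "q = [u'] @ ds" using q_def by simp
  have "q ! (length q - 2) = ds ! (length ds - 2)" unfolding qa by (rule app_nth_end2[OF ds(2)])
  moreover have "q ! (length q - 1) = ds ! (length ds - 1)" unfolding qa
    by (rule app_nth_end1) (use ds(2) in auto)
  moreover have "q ! 0 = u'" "q ! 1 = u" using q_def ds(3) by simp_all
  ultimately have pbq: "path_between_edges E {u', u} {ds ! (length ds - 2), ds ! (length ds - 1)} q"
    unfolding path_between_edges_def using uq q_def lq by simp
  have ne: "{u', u} \<noteq> {ds ! (length ds - 2), ds ! (length ds - 1)}" by (rule ends_differ[OF pbq lq])
  have e2E: "{ds ! (length ds - 2), ds ! (length ds - 1)} \<in> E"
    using dpath_arc_end[OF ds(1,2)] unfolding arc_def by blast
  have "f {u', u} > 0" using a0 by simp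
  then obtain ps' e3 where p': "path_between_edges E {u', u} {ds ! (length ds - 2), ds ! (length ds - 1)} ps'"
    "e3 \<in> path_edges ps'" "f e3 > f {u', u}"
    using valid e1E e2E ne ds(5) a_def unfolding valid_labeling_def by metis
  have "ps' = q" by (rule pb_uniq[OF p'(1) pbq ne])
  then have "e3 \<in> insert {u', u} (path_edges ds)" using p'(2) q_def dsu zne
    by (simp add: path_edges_Cons)
  then have "f e3 \<le> a" using ds(6) a_def by auto
  then show False using p'(3) a_def by simp
qed

lemma fwd2:
  assumes valid: "valid_labeling E f" and uV: "u \<in> V" and av: "arc E r u v" and aw: "arc E r u w"
    and vw: "v \<noteq> w" and h1: "a \<in> vis_seq E r f (u, v)" and h2: "a \<in> vis_seq E r f (u, w)"
    and a0: "a \<noteq> 0"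
  shows False
proof -
  obtain ds1 where d1: "dpath E r ds1" "2 \<le> length ds1" "ds1 ! 0 = u" "ds1 ! 1 = v"
    "a = f {ds1 ! (length ds1 - 2), ds1 ! (length ds1 - 1)}"
    "\<forall>e\<in>path_edges ds1. f e \<le> a"
    by (rule vis_elim[OF h1])
  obtain ds2 where d2: "dpath E r ds2" "2 \<le> length ds2" "ds2 ! 0 = u" "ds2 ! 1 = w"
    "a = f {ds2 ! (length ds2 - 2), ds2 ! (length ds2 - 1)}"
    "\<forall>e\<in>path_edges ds2. f e \<le> a"
    by (rule vis_elim[OF h2])
  define as where "as = drop 2 ds1"
  define bs where "bs = drop 2 ds2"
  have ds1e: "ds1 = u # v # as" using len2_split[OF d1(2)] d1(3,4) as_def by simp
  have ds2e: "ds2 = u # w # bs" using len2_split[OF d2(2)] d2(3,4) bs_def by simp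
  obtain L where L: "upath E L" "hd L = r" "last L = u" using root_ex uV by blast
  have Lne: "L \<noteq> []" using L(1) by (simp add: upath_def)
  have Lb: "L = butlast L @ [u]" using Lne L(3) append_butlast_last_id by fastforce
  have r1: "upath E (L @ v # as)" using dpath_root[of u "v # as" L] d1(1) ds1e L by simp
  have r2: "upath E (L @ w # bs)" using dpath_root[of u "w # bs" L] d2(1) ds2e L by simp
  have dj: "set (v # as) \<inter> set (w # bs) = {}" by (rule disj[OF r1 r2 L(2) Lne vw])
  have "upath E (butlast L @ (u # v # as))" using r1 Lb by (metis append.assoc append_Cons append_Nil)
  then have u1: "upath E ds1" unfolding ds1e by (rule upath_suffix) simp
  have "upath E (butlast L @ (u # w # bs))" using r2 Lb by (metis append.assoc append_Cons append_Nil)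
  then have u2: "upath E ds2" unfolding ds2e by (rule upath_suffix) simp
  define q where "q = rev (v # as) @ u # w # bs"
  have J: "upath E q" "path_edges q = path_edges ds1 \<union> path_edges ds2"
    "path_between_edges E {ds1 ! (length ds1 - 2), ds1 ! (length ds1 - 1)} {ds2 ! (length ds2 - 2), ds2 ! (length ds2 - 1)} q"
    "3 \<le> length q"
    using join[OF u1[unfolded ds1e] u2[unfolded ds2e] dj] unfolding q_def ds1e ds2e
    by blast+
  have ne: "{ds1 ! (length ds1 - 2), ds1 ! (length ds1 - 1)} \<noteq> {ds2 ! (length ds2 - 2), ds2 ! (length ds2 - 1)}"
    by (rule ends_differ[OF J(3) J(4)])
  have e1E: "{ds1 ! (length ds1 - 2), ds1 ! (length ds1 - 1)} \<in> E"
    using dpath_arc_end[OF d1(1,2)] unfolding arc_def by blast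
  have e2E: "{ds2 ! (length ds2 - 2), ds2 ! (length ds2 - 1)} \<in> E"
    using dpath_arc_end[OF d2(1,2)] unfolding arc_def by blast
  obtain ps' e3 where p': "path_between_edges E {ds1 ! (length ds1 - 2), ds1 ! (length ds1 - 1)} {ds2 ! (length ds2 - 2), ds2 ! (length ds2 - 1)} ps'"
    "e3 \<in> path_edges ps'" "f e3 > a"
    using valid e1E e2E ne d1(5) d2(5) a0 unfolding valid_labeling_def by (metis neq0_conv)
  have "ps' = q" by (rule pb_uniq[OF p'(1) J(3) ne])
  then have "f e3 \<le> a" using p'(2) J(2) d1(6) d2(6) by auto
  then show False using p'(3) by simp
qed

lemma bwdA:
  assumes H1: "\<forall>u\<in>V. \<forall>u'. arc E r u' u \<longrightarrow> f {u', u} \<notin> S_set E r f u \<or> f {u', u} = 0"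
    and uL: "upath E L" and hL: "hd L = r" and L1: "L = ps1 @ [p1, c1] @ ys" and L2: "L = ps2 @ [p2, c2]"
    and yne: "ys \<noteq> []" and f1: "f {p1, c1} = a" and f2: "f {p2, c2} = a" and a0: "0 < a"
    and NB: "\<forall>ps. path_between_edges E {p1, c1} {p2, c2} ps \<longrightarrow> (\<forall>e\<in>path_edges ps. f e \<le> a)"
  shows False
proof -
  define q where "q = p1 # c1 # ys"
  have Lq: "ps1 @ q = ps2 @ [p2, c2]" using L1 L2 q_def by simp
  have uq: "upath E q" using uL L1 q_def upath_suffix[of E ps1 q] by simp
  have lq: "2 \<le> length q" using q_def by simp
  have eq: "q ! (length q - 2) = p2" "q ! (length q - 1) = c2" using ends_of_app[OF Lq lq] by simp_all
  have "path_between_edges E {p1, c1} {p2, c2} q"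
    unfolding path_between_edges_def using uq lq eq q_def by simp
  then have qa: "\<forall>e\<in>path_edges q. f e \<le> a" using NB by blast
  define ds where "ds = c1 # ys"
  have Lds: "(ps1 @ [p1]) @ ds = ps2 @ [p2, c2]" using L1 L2 ds_def by simp
  have lds: "2 \<le> length ds" using ds_def yne by (cases ys) auto
  have eds: "ds ! (length ds - 2) = p2" "ds ! (length ds - 1) = c2" using ends_of_app[OF Lds lds] by simp_all
  have "drop (Suc (length ps1)) L = ds" using L1 ds_def by simp
  then have dds: "dpath E r ds" using dpath_drop[OF uL hL, of "Suc (length ps1)"] by simp
  have "path_edges q = insert {p1, c1} (path_edges ds)" unfolding q_def ds_def by (rule path_edges_Cons2)
  then have "\<forall>e\<in>path_edges ds. f e \<le> f {ds ! (length ds - 2), ds ! (length ds - 1)}"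
    using qa eds f2 by auto
  from vis_intro[OF dds lds this] have "a \<in> vis_seq E r f (ds ! 0, ds ! 1)" using eds f2 by simp
  moreover have "arc E r (ds ! 0) (ds ! Suc 0)" using dds lds unfolding dpath_def by auto
  ultimately have Sa: "a \<in> S_set E r f c1" unfolding S_set_def using ds_def by auto
  have "drop (length ps1) L = q" using L1 q_def by simp
  then have "dpath E r q" using dpath_drop[OF uL hL, of "length ps1"] by simp
  then have ap: "arc E r p1 c1" using q_def unfolding dpath_def by force
  then have "{p1, c1} \<in> E" unfolding arc_def by blast
  then have cV: "c1 \<in> V" using edge_V by blast
  have "f {p1, c1} \<notin> S_set E r f c1 \<or> f {p1, c1} = 0" using H1[rule_format, OF cV ap] .
  then show False using Sa f1 a0 by simp
qed

lemma bwdC: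
  assumes H2: "\<forall>u\<in>V. \<forall>v w. arc E r u v \<and> arc E r u w \<and> v \<noteq> w \<longrightarrow>
          vis_seq E r f (u, v) \<inter> vis_seq E r f (u, w) \<subseteq> {0}"
    and uL1: "upath E L1" and hL1: "hd L1 = r" and L1a: "L1 = C @ v # as" and L1b: "L1 = ps1 @ [p1, c1]"
    and uL2: "upath E L2" and hL2: "hd L2 = r" and L2a: "L2 = C @ w # bs" and L2b: "L2 = ps2 @ [p2, c2]"
    and Cne: "C \<noteq> []" and vw: "v \<noteq> w"
    and f1: "f {p1, c1} = a" and f2: "f {p2, c2} = a" and a0: "0 < a"
    and NB: "\<forall>ps. path_between_edges E {p1, c1} {p2, c2} ps \<longrightarrow> (\<forall>e\<in>path_edges ps. f e \<le> a)"
  shows False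
proof -
  define u where "u = last C"
  have Cb: "C = butlast C @ [u]" using Cne u_def by simp
  define D1 where "D1 = u # v # as"
  define D2 where "D2 = u # w # bs"
  have L1D: "L1 = butlast C @ D1" using L1a Cb D1_def by (metis append.assoc append_Cons append_Nil)
  have L2D: "L2 = butlast C @ D2" using L2a Cb D2_def by (metis append.assoc append_Cons append_Nil)
  have u1: "upath E D1" using uL1 L1D upath_suffix[of E "butlast C" D1] D1_def by simp
  have u2: "upath E D2" using uL2 L2D upath_suffix[of E "butlast C" D2] D2_def by simp
  have dd1: "dpath E r D1" using dpath_drop[OF uL1 hL1, of "length (butlast C)"] L1D by simp
  have dd2: "dpath E r D2" using dpath_drop[OF uL2 hL2, of "length (butlast C)"] L2D by simp
  have hC: "hd C = r" using hL1 L1a Cne by simp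
  have dj: "set (v # as) \<inter> set (w # bs) = {}"
    by (rule disj[OF uL1[unfolded L1a] uL2[unfolded L2a] hC Cne vw])
  define q where "q = rev (v # as) @ u # w # bs"
  have J: "upath E q" "path_edges q = path_edges D1 \<union> path_edges D2"
    "path_between_edges E {D1 ! (length D1 - 2), D1 ! (length D1 - 1)} {D2 ! (length D2 - 2), D2 ! (length D2 - 1)} q"
    using join[OF u1[unfolded D1_def] u2[unfolded D2_def] dj] unfolding q_def D1_def D2_def
    by blast+
  have l1: "2 \<le> length D1" "2 \<le> length D2" using D1_def D2_def by simp_all
  have e1: "D1 ! (length D1 - 2) = p1" "D1 ! (length D1 - 1) = c1"
    using ends_of_app[OF _ l1(1), of "butlast C" ps1 p1 c1] L1D L1b by simp_all
  have e2: "D2 ! (length D2 - 2) = p2" "D2 ! (length D2 - 1) = c2"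
    using ends_of_app[OF _ l1(2), of "butlast C" ps2 p2 c2] L2D L2b by simp_all
  have "\<forall>e\<in>path_edges q. f e \<le> a" using NB J(3) e1 e2 by simp
  then have pa1: "\<forall>e\<in>path_edges D1. f e \<le> a" and pa2: "\<forall>e\<in>path_edges D2. f e \<le> a"
    using J(2) by auto
  have "a \<in> vis_seq E r f (D1 ! 0, D1 ! 1)" using vis_intro[OF dd1 l1(1), where f=f] pa1 e1 f1 by simp
  then have va: "a \<in> vis_seq E r f (u, v)" using D1_def by simp
  have "a \<in> vis_seq E r f (D2 ! 0, D2 ! 1)" using vis_intro[OF dd2 l1(2), where f=f] pa2 e2 f2 by simp
  then have wa: "a \<in> vis_seq E r f (u, w)" using D2_def by simp
  have av: "arc E r u v" using dd1 D1_def unfolding dpath_def by force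
  have aw: "arc E r u w" using dd2 D2_def unfolding dpath_def by force
  have "u \<in> set L1" using L1a Cne u_def by simp
  then have uV: "u \<in> V" using upath_set[OF uL1] hL1 rV by auto
  show False using H2 uV av aw vw va wa a0 by blast
qed

lemma orient:
  assumes "e \<in> E"
  obtains p c ps where "e = {p, c}" "upath E (ps @ [p, c])" "hd (ps @ [p, c]) = r"
proof -
  obtain x y where xy: "e = {x, y}" using edge_form assms by blast
  then have "arc E r x y \<or> arc E r y x" using arc_or assms by simp
  then show ?thesis
  proof
    assume "arc E r x y" then show ?thesis using that xy unfolding arc_def by blast
  next
    assume "arc E r y x" then show ?thesis using that xy unfolding arc_def by (metis insert_commute)
  qed
qed

lemma bwd:
  assumes H1: "\<forall>u\<in>V. \<forall>u'. arc E r u' u \<longrightarrow> f {u', u} \<notin> S_set E r f u \<or> f {u', u} = 0"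
    and H2: "\<forall>u\<in>V. \<forall>v w. arc E r u v \<and> arc E r u w \<and> v \<noteq> w \<longrightarrow>
          vis_seq E r f (u, v) \<inter> vis_seq E r f (u, w) \<subseteq> {0}"
  shows "valid_labeling E f"
  unfolding valid_labeling_def
proof (intro ballI impI)
  fix e1 e2 assume e1: "e1 \<in> E" and e2: "e2 \<in> E" and h: "e1 \<noteq> e2 \<and> f e1 = f e2 \<and> 0 < f e1"
  define a where "a = f e1"
  show "\<exists>ps e3. path_between_edges E e1 e2 ps \<and> e3 \<in> path_edges ps \<and> f e1 < f e3"
  proof (rule ccontr)
    assume "\<not> ?thesis"
    then have NB: "\<forall>ps. path_between_edges E e1 e2 ps \<longrightarrow> (\<forall>e\<in>path_edges ps. f e \<le> a)"
      using a_def not_less by blast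
    have NB': "\<forall>ps. path_between_edges E e2 e1 ps \<longrightarrow> (\<forall>e\<in>path_edges ps. f e \<le> a)"
    proof (intro allI impI)
      fix ps assume "path_between_edges E e2 e1 ps"
      then have "path_between_edges E e1 e2 (rev ps)" by (rule pb_rev)
      then show "\<forall>e\<in>path_edges ps. f e \<le> a" using NB by (metis path_edges_rev)
    qed
    obtain p1 c1 ps1 where o1: "e1 = {p1, c1}" "upath E (ps1 @ [p1, c1])" "hd (ps1 @ [p1, c1]) = r"
      using orient[OF e1] by blast
    obtain p2 c2 ps2 where o2: "e2 = {p2, c2}" "upath E (ps2 @ [p2, c2])" "hd (ps2 @ [p2, c2]) = r"
      using orient[OF e2] by blast
    have f1: "f {p1, c1} = a" and f2: "f {p2, c2} = a" and a0: "0 < a" using h a_def o1 o2 by auto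
    obtain C xs ys where C: "ps1 @ [p1, c1] = C @ xs" "ps2 @ [p2, c2] = C @ ys"
      "xs = [] \<or> ys = [] \<or> hd xs \<noteq> hd ys"
      using lcp_ex by blast
    show False
    proof (cases "xs = []")
      case xs: True
      show False
      proof (cases "ys = []")
        case True
        then have "ps1 @ [p1, c1] = ps2 @ [p2, c2]" using C xs by simp
        then have "rev (ps1 @ [p1, c1]) = rev (ps2 @ [p2, c2])" by simp
        then have "p1 = p2" "c1 = c2" by simp_all
        then show False using h o1 o2 by simp
      next
        case False
        have "ps2 @ [p2, c2] = ps1 @ [p1, c1] @ ys" using C xs by simp
        then show False
          using bwdA[OF H1 o2(2,3) _ refl False f1 f2 a0] NB o1 o2 by simp
      qed
    next
      case xsne: False
      show False
      proof (cases "ys = []")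
        case True
        have "ps1 @ [p1, c1] = ps2 @ [p2, c2] @ xs" using C True by simp
        then show False
          using bwdA[OF H1 o1(2,3) _ refl xsne f2 f1 a0] NB' o1 o2 by simp
      next
        case False
        then have hne: "hd xs \<noteq> hd ys" using C(3) xsne by simp
        obtain v as where xse: "xs = v # as" using xsne by (cases xs) auto
        obtain w bs where yse: "ys = w # bs" using False by (cases ys) auto
        have Cne: "C \<noteq> []"
        proof
          assume "C = []"
          then have "hd xs = r" "hd ys = r" using C o1(3) o2(3) by simp_all
          then show False using hne by simp
        qed
        show False
          by (rule bwdC[OF H2 o1(2,3) C(1)[unfolded xse] refl o2(2,3) C(2)[unfolded yse] refl Cne _ f1 f2 a0])
             (use hne xse yse NB o1 o2 in simp_all)
      qed
    qed
  qed
qed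

end

theorem proposition4p2:
  fixes V :: "'a set" and E :: "'a set set" and f :: "'a set \<Rightarrow> nat"
    and k :: nat and r :: 'a
  assumes "is_tree V E"
    and "k \<ge> 1"
    and "\<forall>e\<in>E. f e \<le> k"
    and "r \<in> V"
  shows "valid_labeling E f \<longleftrightarrow>
     ((\<forall>u\<in>V. \<forall>u'. arc E r u' u \<longrightarrow> f {u', u} \<notin> S_set E r f u \<or> f {u', u} = 0) \<and>
      (\<forall>u\<in>V. \<forall>v w. arc E r u v \<and> arc E r u w \<and> v \<noteq> w \<longrightarrow>
          vis_seq E r f (u, v) \<inter> vis_seq E r f (u, w) \<subseteq> {0}))"
proof -
  interpret rtree V E r using assms(1,4) by unfold_locales
  show ?thesis
  proof
    assume valid: "valid_labeling E f"
    show "(\<forall>u\<in>V. \<forall>u'. arc E r u' u \<longrightarrow> f {u', u} \<notin> S_set E r f u \<or> f {u', u} = 0) \<and>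
      (\<forall>u\<in>V. \<forall>v w. arc E r u v \<and> arc E r u w \<and> v \<noteq> w \<longrightarrow>
          vis_seq E r f (u, v) \<inter> vis_seq E r f (u, w) \<subseteq> {0})"
    proof (intro conjI ballI allI impI)
      fix u u' assume uV: "u \<in> V" and au: "arc E r u' u"
      show "f {u', u} \<notin> S_set E r f u \<or> f {u', u} = 0" using fwd1[OF valid au] by blast
    next
      fix u v w assume uV: "u \<in> V" and h: "arc E r u v \<and> arc E r u w \<and> v \<noteq> w"
      show "vis_seq E r f (u, v) \<inter> vis_seq E r f (u, w) \<subseteq> {0}"
      proof
        fix a assume "a \<in> vis_seq E r f (u, v) \<inter> vis_seq E r f (u, w)"
        then show "a \<in> {0}" using fwd2[OF valid uV, of v w a] h by blast
      qed
    qed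
  next
    assume h: "(\<forall>u\<in>V. \<forall>u'. arc E r u' u \<longrightarrow> f {u', u} \<notin> S_set E r f u \<or> f {u', u} = 0) \<and>
      (\<forall>u\<in>V. \<forall>v w. arc E r u v \<and> arc E r u w \<and> v \<noteq> w \<longrightarrow>
          vis_seq E r f (u, v) \<inter> vis_seq E r f (u, w) \<subseteq> {0})"
    show "valid_labeling E f" by (rule bwd[OF conjunct1[OF h] conjunct2[OF h]])
  qed
qed

end
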